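(* Let $X$ be a simplicial set, let $Y$ be a reduced $N$-simplicial set, and let $f\colon X\to Y$ be a simplicial map. Then $f$ is completely determined by its restriction to the $1$-skeleton of $X$.
   Context: A simplicial set $Y$ is reduced if $Y_0$ is a single point. The enumerating operator $E_n\colon Y_n\to Y_1\times\cdots\times Y_1$ ($n$ factors) sends an $n$-simplex $\sigma\colon\Delta[n]\to Y$ to the tuple of its consecutive edges $(\sigma|_{\{0,1\}},\dots,\sigma|_{\{n-1,n\}})$. $Y$ is an $N$-simplicial set if $E_n$ is injective for every $n\ge1$. *)

theory Defs
  imports Main
begin

text \<open>A simplicial operator theta : [m] -> [n] is a weakly monotone map
  {0..m} -> {0..n}; it is represented by a function nat => nat whose values
  outside {0..m} are irrelevant.\<close>
definition simp_op :: "nat \<Rightarrow> nat \<Rightarrow> (nat \<Rightarrow> nat) \<Rightarrow> bool" where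
  "simp_op m n \<theta> \<longleftrightarrow> (\<forall>i\<le>m. \<theta> i \<le> n) \<and> (\<forall>i j. i \<le> j \<longrightarrow> j \<le> m \<longrightarrow> \<theta> i \<le> \<theta> j)"

definition simplicial_set ::
  "(nat \<Rightarrow> 'a set) \<Rightarrow> (nat \<Rightarrow> nat \<Rightarrow> (nat \<Rightarrow> nat) \<Rightarrow> 'a \<Rightarrow> 'a) \<Rightarrow> bool" where
  "simplicial_set X act \<longleftrightarrow>
     (\<forall>m n \<theta> x. simp_op m n \<theta> \<longrightarrow> x \<in> X n \<longrightarrow> act m n \<theta> x \<in> X m) \<and>
     (\<forall>m n \<theta> \<theta>' x. x \<in> X n \<longrightarrow> (\<forall>i\<le>m. \<theta> i = \<theta>' i) \<longrightarrow> act m n \<theta> x = act m n \<theta>' x) \<and>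
     (\<forall>n x. x \<in> X n \<longrightarrow> act n n id x = x) \<and>
     (\<forall>k m n \<phi> \<theta> x. simp_op k m \<phi> \<longrightarrow> simp_op m n \<theta> \<longrightarrow> x \<in> X n \<longrightarrow>
         act k m \<phi> (act m n \<theta> x) = act k n (\<theta> \<circ> \<phi>) x)"

definition simplicial_map ::
  "(nat \<Rightarrow> 'a set) \<Rightarrow> (nat \<Rightarrow> nat \<Rightarrow> (nat \<Rightarrow> nat) \<Rightarrow> 'a \<Rightarrow> 'a) \<Rightarrow>
   (nat \<Rightarrow> 'b set) \<Rightarrow> (nat \<Rightarrow> nat \<Rightarrow> (nat \<Rightarrow> nat) \<Rightarrow> 'b \<Rightarrow> 'b) \<Rightarrow>
   (nat \<Rightarrow> 'a \<Rightarrow> 'b) \<Rightarrow> bool" where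
  "simplicial_map X actX Y actY f \<longleftrightarrow>
     (\<forall>n x. x \<in> X n \<longrightarrow> f n x \<in> Y n) \<and>
     (\<forall>m n \<theta> x. simp_op m n \<theta> \<longrightarrow> x \<in> X n \<longrightarrow> f m (actX m n \<theta> x) = actY m n \<theta> (f n x))"

definition reduced :: "(nat \<Rightarrow> 'a set) \<Rightarrow> bool" where
  "reduced X \<longleftrightarrow> (\<exists>y. X 0 = {y})"

definition edge :: "(nat \<Rightarrow> nat \<Rightarrow> (nat \<Rightarrow> nat) \<Rightarrow> 'a \<Rightarrow> 'a) \<Rightarrow> nat \<Rightarrow> nat \<Rightarrow> 'a \<Rightarrow> 'a" where
  "edge act n i \<sigma> = act 1 n (\<lambda>j. if j = 0 then i else Suc i) \<sigma>"

text \<open>Enumerating operator E_n : Y_n -> Y_1 x ... x Y_1 (n factors), tuples as lists.\<close>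
definition enum_op :: "(nat \<Rightarrow> nat \<Rightarrow> (nat \<Rightarrow> nat) \<Rightarrow> 'a \<Rightarrow> 'a) \<Rightarrow> nat \<Rightarrow> 'a \<Rightarrow> 'a list" where
  "enum_op act n \<sigma> = map (\<lambda>i. edge act n i \<sigma>) [0..<n]"

definition N_simplicial :: "(nat \<Rightarrow> 'a set) \<Rightarrow> (nat \<Rightarrow> nat \<Rightarrow> (nat \<Rightarrow> nat) \<Rightarrow> 'a \<Rightarrow> 'a) \<Rightarrow> bool" where
  "N_simplicial Y act \<longleftrightarrow> (\<forall>n\<ge>1. inj_on (enum_op act n) (Y n))"

end

theory Submission
  imports Defs
begin

theorem lemma4p6:
  fixes X :: "nat \<Rightarrow> 'a set" and actX :: "nat \<Rightarrow> nat \<Rightarrow> (nat \<Rightarrow> nat) \<Rightarrow> 'a \<Rightarrow> 'a"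
    and Y :: "nat \<Rightarrow> 'b set" and actY :: "nat \<Rightarrow> nat \<Rightarrow> (nat \<Rightarrow> nat) \<Rightarrow> 'b \<Rightarrow> 'b"
    and f g :: "nat \<Rightarrow> 'a \<Rightarrow> 'b"
  assumes "simplicial_set X actX"
    and "simplicial_set Y actY" and "reduced Y" and "N_simplicial Y actY"
    and "simplicial_map X actX Y actY f" and "simplicial_map X actX Y actY g"
    and "\<forall>k\<le>1. \<forall>x\<in>X k. f k x = g k x"
  shows "\<forall>n. \<forall>x\<in>X n. f n x = g n x"
proof (intro allI ballI)
  fix n x assume x: "x \<in> X n"
  show "f n x = g n x"
  proof (cases "n \<le> 1")
    case True thus ?thesis using assms(7) x by blast
  next
    case False
    have inj: "inj_on (enum_op actY n) (Y n)" using assms(4) False unfolding N_simplicial_def by simp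
    have fY: "f n x \<in> Y n" "g n x \<in> Y n" using assms(5,6) x unfolding simplicial_map_def by auto
    have "edge actY n i (f n x) = edge actY n i (g n x)" if i: "i < n" for i
    proof -
      let ?t = "\<lambda>j::nat. if j = 0 then i else Suc i"
      have so: "simp_op 1 n ?t" using i unfolding simp_op_def by auto
      have ax: "actX 1 n ?t x \<in> X 1" using assms(1) so x unfolding simplicial_set_def by blast
      have "edge actY n i (f n x) = f 1 (actX 1 n ?t x)"
        using assms(5) so x unfolding simplicial_map_def edge_def by simp
      also have "\<dots> = g 1 (actX 1 n ?t x)" using assms(7) ax by simp
      also have "\<dots> = edge actY n i (g n x)"
        using assms(6) so x unfolding simplicial_map_def edge_def by simp
      finally show ?thesis .
    qed
    hence "enum_op actY n (f n x) = enum_op actY n (g n x)" unfolding enum_op_def by simp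
    thus ?thesis using inj fY inj_on_def by metis
  qed
qed

end
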